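(* Let $n\geq 3$, $m=2^{n-1}$, and let $G_2(n)$ be the gyrogroup of order $2^n$ defined in the context. A subset $H$ of $G_2(n)$ is a subgyrogroup of $G_2(n)$ if and only if it has one of the following forms: (1) $H=\langle 2^s\rangle$, a subgroup of $P(n)$, with $0\leq s\leq n-1$; (2) $H=\langle 2^s, m\rangle$ with $0\leq s\leq n-1$; all such $H$ are subgroups of $G_2(n)$ (i.e. subgyrogroups on which the operation is associative, all gyroautomorphisms restricting to the identity) except $H=\langle 1,m\rangle=G_2(n)$; (3) $H=\langle m+2^s\rangle$ with $0\leq s\leq n-2$, which is a subgroup of $G_2(n)$.
   Context: Setup: $n\ge 3$, $m=2^{n-1}$, $G_2(n)=\{0,1,\dots,2^n-1\}$, $P(n)=\{0,\dots,m-1\}$, $H(n)=\{m,\dots,2^n-1\}$; $O_P,E_P$ are the odd/even elements of $P(n)$, $O_H,E_H$ the odd/even elements of $H(n)$. For $i,j\in G_2(n)$ let $t,s\in P(n)$ with $t\equiv i+j\pmod m$, $s\equiv i+j+\frac m2\pmod m$, and set $i\oplus j=t$ if $(i,j)\in (P(n)\times P(n))\cup\big[(H(n)\times H(n))\setminus(E_H\times O_H)\big]$; $i\oplus j=t+m$ if $(i,j)\in (P(n)\times H(n))\cup\big[(H(n)\times P(n))\setminus(E_H\times O_P)\big]$; $i\oplus j=s$ if $(i,j)\in E_H\times O_H$; $i\oplus j=s+m$ if $(i,j)\in E_H\times O_P$. Let $A\colon G_2(n)\to G_2(n)$ be $A(i)=r$ if $i\in O_P$, $A(i)=r+m$ if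 $i\in O_H$, $A(i)=i$ otherwise, where $r\in P(n)$, $r\equiv i+\frac m2\pmod m$. Let $M=[O_P\times(O_H\cup E_H)]\cup[O_H\times(O_P\cup E_H)]\cup[E_H\times(O_P\cup O_H)]$, and $\mathrm{gyr}[a,b]=A$ if $(a,b)\in M$, $\mathrm{gyr}[a,b]=I$ (identity) otherwise. Then $(G_2(n),\oplus)$ is a gyrogroup with identity $0$ and gyroautomorphisms $\mathrm{gyr}[a,b]$; the restriction of $\oplus$ to $P(n)$ is addition modulo $m$, so $P(n)\cong\mathbb{Z}_m$. A subgyrogroup of a gyrogroup $G$ is a nonempty subset $H$ which is a gyrogroup under the restriction of $\oplus$ and such that for all $a,b\in H$ the restriction of $\mathrm{gyr}[a,b]$ to $H$ is an automorphism of $H$. For a subset $X$, $\langle X\rangle$ denotes the subgyrogroup generated by $X$ (the smallest subgyrogroup containing $X$); in (1), $\langle 2^s\rangle$ is the cyclic subgroup of $P(n)\cong\mathbb{Z}_m$ generated by $2^s$ modulo $m$. *)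

theory Defs
  imports Main
begin

definition mm :: "nat \<Rightarrow> nat" where "mm n = 2 ^ (n - 1)"

definition G2 :: "nat \<Rightarrow> nat set" where "G2 n = {..< 2 ^ n}"
definition PP :: "nat \<Rightarrow> nat set" where "PP n = {..< mm n}"
definition HH :: "nat \<Rightarrow> nat set" where "HH n = {mm n ..< 2 ^ n}"
definition OP :: "nat \<Rightarrow> nat set" where "OP n = {i \<in> PP n. odd i}"
definition EP :: "nat \<Rightarrow> nat set" where "EP n = {i \<in> PP n. even i}"
definition OH :: "nat \<Rightarrow> nat set" where "OH n = {i \<in> HH n. odd i}"
definition EH :: "nat \<Rightarrow> nat set" where "EH n = {i \<in> HH n. even i}"

definition goplus :: "nat \<Rightarrow> nat \<Rightarrow> nat \<Rightarrow> nat" where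
  "goplus n i j =
    (let m = mm n; t = (i + j) mod m; s = (i + j + m div 2) mod m in
     if (i, j) \<in> (PP n \<times> PP n) \<union> ((HH n \<times> HH n) - (EH n \<times> OH n)) then t
     else if (i, j) \<in> (PP n \<times> HH n) \<union> ((HH n \<times> PP n) - (EH n \<times> OP n)) then t + m
     else if (i, j) \<in> EH n \<times> OH n then s
     else if (i, j) \<in> EH n \<times> OP n then s + m
     else undefined)"

definition gA :: "nat \<Rightarrow> nat \<Rightarrow> nat" where
  "gA n i =
    (let m = mm n; r = (i + m div 2) mod m in
     if i \<in> OP n then r else if i \<in> OH n then r + m else i)"

definition gM :: "nat \<Rightarrow> (nat \<times> nat) set" where
  "gM n = (OP n \<times> (OH n \<union> EH n)) \<union> (OH n \<times> (OP n \<union> EH n)) \<union> (EH n \<times> (OP n \<union> OH n))"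

definition ggyr :: "nat \<Rightarrow> nat \<Rightarrow> nat \<Rightarrow> nat \<Rightarrow> nat" where
  "ggyr n a b = (if (a, b) \<in> gM n then gA n else id)"

definition is_aut_on :: "'a set \<Rightarrow> ('a \<Rightarrow> 'a \<Rightarrow> 'a) \<Rightarrow> ('a \<Rightarrow> 'a) \<Rightarrow> bool" where
  "is_aut_on S op f \<longleftrightarrow> bij_betw f S S \<and> (\<forall>x\<in>S. \<forall>y\<in>S. f (op x y) = op (f x) (f y))"

definition gyrogroup_on :: "'a set \<Rightarrow> ('a \<Rightarrow> 'a \<Rightarrow> 'a) \<Rightarrow> bool" where
  "gyrogroup_on S op \<longleftrightarrow>
     S \<noteq> {} \<and> (\<forall>a\<in>S. \<forall>b\<in>S. op a b \<in> S) \<and>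
     (\<exists>e\<in>S. (\<forall>a\<in>S. op e a = a) \<and> (\<forall>a\<in>S. \<exists>b\<in>S. op b a = e)) \<and>
     (\<exists>gyr. (\<forall>a\<in>S. \<forall>b\<in>S. \<forall>c\<in>S. op a (op b c) = op (op a b) (gyr a b c)) \<and>
            (\<forall>a\<in>S. \<forall>b\<in>S. is_aut_on S op (gyr a b)) \<and>
            (\<forall>a\<in>S. \<forall>b\<in>S. \<forall>c\<in>S. gyr (op a b) b c = gyr a b c))"

definition subgyrogroup :: "nat \<Rightarrow> nat set \<Rightarrow> bool" where
  "subgyrogroup n H \<longleftrightarrow> H \<noteq> {} \<and> H \<subseteq> G2 n \<and> gyrogroup_on H (goplus n) \<and>
     (\<forall>a\<in>H. \<forall>b\<in>H. is_aut_on H (goplus n) (ggyr n a b))"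

definition subgroup_G2 :: "nat \<Rightarrow> nat set \<Rightarrow> bool" where
  "subgroup_G2 n H \<longleftrightarrow> subgyrogroup n H \<and>
     (\<forall>a\<in>H. \<forall>b\<in>H. \<forall>c\<in>H. goplus n a (goplus n b c) = goplus n (goplus n a b) c) \<and>
     (\<forall>a\<in>H. \<forall>b\<in>H. \<forall>c\<in>H. ggyr n a b c = c)"

definition gen :: "nat \<Rightarrow> nat set \<Rightarrow> nat set" where
  "gen n X = \<Inter> {H. subgyrogroup n H \<and> X \<subseteq> H}"

definition cycP :: "nat \<Rightarrow> nat \<Rightarrow> nat set" where
  "cycP n s = {(k * 2 ^ s) mod mm n | k. True}"

end

theory Submission imports Defs "HOL-Computational_Algebra.Primes" begin

definition cc :: "nat \<Rightarrow> nat" where "cc n = mm n div 2"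

lemma basics:
  assumes "3 \<le> n"
  shows "mm n = 2 * cc n" "even (cc n)" "2 \<le> cc n" "2 ^ n = 2 * mm n" "4 \<le> mm n"
proof -
  obtain k where k: "n = Suc (Suc (Suc k))" using assms by (metis Suc3_eq_add_3 add.commute le_Suc_ex)
  show "mm n = 2 * cc n" "even (cc n)" "2 \<le> cc n" "2 ^ n = 2 * mm n" "4 \<le> mm n"
    using k by (auto simp: mm_def cc_def)
qed

lemma hi: "(i::nat) < 2 * m \<Longrightarrow> i div m = (if i < m then 0 else 1)"
  by (auto intro: div_nat_eqI)

lemma gop:
  assumes "3 \<le> n" "i < 2*mm n" "j < 2*mm n"
  shows "goplus n i j = (i + j + (if mm n \<le> i \<and> even i \<and> odd j then cc n else 0)) mod mm n
          + mm n * ((i div mm n + j div mm n) mod 2)"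
proof -
  have m: "mm n = 2 * cc n" "even (cc n)" "2^n = 2 * mm n" using basics[OF assms(1)] by auto
  have ev: "odd (i + mm n) = odd i" for i using m by auto
  show ?thesis
  proof (cases "i < mm n")
    case True
    then show ?thesis
    proof (cases "j < mm n")
      case True
      then show ?thesis using \<open>i < mm n\<close> assms
        by (simp add: goplus_def Let_def PP_def HH_def EH_def OH_def OP_def EP_def hi m(3))
    next
      case False
      then show ?thesis using \<open>i < mm n\<close> assms
        by (simp add: goplus_def Let_def PP_def HH_def EH_def OH_def OP_def EP_def hi m(3))
    qed
  next
    case False
    then show ?thesis
    proof (cases "j < mm n")
      case True
      then show ?thesis using \<open>\<not> i < mm n\<close> assms
        by (simp add: goplus_def Let_def PP_def HH_def EH_def OH_def OP_def EP_def hi cc_def m(3))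
    next
      case False
      then show ?thesis using \<open>\<not> i < mm n\<close> assms
        by (simp add: goplus_def Let_def PP_def HH_def EH_def OH_def OP_def EP_def hi cc_def m(3))
    qed
  qed
qed

lemma gop_props:
  assumes "3 \<le> n" "i < 2*mm n" "j < 2*mm n"
  shows "goplus n i j < 2 * mm n"
    "goplus n i j mod mm n = (i + j + cc n * (if mm n \<le> i \<and> even i \<and> odd j then 1 else 0)) mod mm n"
    "(mm n \<le> goplus n i j) = ((mm n \<le> i) \<noteq> (mm n \<le> j))"
    "odd (goplus n i j) = (odd i \<noteq> odd j)"
proof -
  have m: "mm n = 2 * cc n" "even (cc n)" "2 \<le> cc n" using basics[OF assms(1)] by auto
  have e: "goplus n i j = (i + j + (if mm n \<le> i \<and> even i \<and> odd j then cc n else 0)) mod mm n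
          + mm n * ((i div mm n + j div mm n) mod 2)" by (rule gop[OF assms])
  have lt: "(i + j + (if mm n \<le> i \<and> even i \<and> odd j then cc n else 0)) mod mm n < mm n"
    using m by simp
  have hd: "(i div mm n + j div mm n) mod 2 = (if (mm n \<le> i) \<noteq> (mm n \<le> j) then 1 else 0)"
    using assms(2,3) by (auto simp: hi)
  have p: "0 < mm n" using m by simp
  have mk: "\<And>k. k mod mm n < mm n" using p by simp
  define r where "r = (i + j + (if mm n \<le> i \<and> even i \<and> odd j then cc n else 0)) mod mm n"
  define h where "h = (if (mm n \<le> i) \<noteq> (mm n \<le> j) then 1 else 0::nat)"
  have e2: "goplus n i j = r + mm n * h" using e hd unfolding r_def h_def by simp
  have rl: "r < mm n" unfolding r_def using mk by blast
  show "goplus n i j < 2 * mm n" using e2 rl unfolding h_def by auto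
  show "goplus n i j mod mm n = (i + j + cc n * (if mm n \<le> i \<and> even i \<and> odd j then 1 else 0)) mod mm n"
    using e hd by auto
  show "(mm n \<le> goplus n i j) = ((mm n \<le> i) \<noteq> (mm n \<le> j))"
    using e2 rl unfolding h_def by auto
  have "odd (goplus n i j) = odd ((i + j + (if mm n \<le> i \<and> even i \<and> odd j then cc n else 0)) mod mm n)"
    using e m by simp
  also have "\<dots> = odd (i + j + (if mm n \<le> i \<and> even i \<and> odd j then cc n else 0))"
    using m by (simp add: dvd_mod_iff)
  also have "\<dots> = (odd i \<noteq> odd j)" using m by auto
  finally show "odd (goplus n i j) = (odd i \<noteq> odd j)" .
qed

lemma eq2:
  assumes "(u::nat) < 2 * m" "v < 2 * m" "u mod m = v mod m" "(m \<le> u) = (m \<le> v)"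
  shows "u = v"
proof -
  have "u div m = v div m" using assms by (auto simp: hi)
  then show ?thesis using assms(3) by (metis div_mult_mod_eq)
qed

lemma gA_props:
  assumes "3 \<le> n" "x < 2*mm n"
  shows "gA n x < 2 * mm n"
    "gA n x mod mm n = (x + cc n * (if odd x then 1 else 0)) mod mm n"
    "(mm n \<le> gA n x) = (mm n \<le> x)"
    "odd (gA n x) = odd x"
proof -
  have m: "mm n = 2 * cc n" "even (cc n)" "2 \<le> cc n" using basics[OF assms(1)] by auto
  have p: "0 < mm n" using m by simp
  have mk: "\<And>k. k mod mm n < mm n" using p by simp
  have ev: "2^n = 2 * mm n" using basics[OF assms(1)] by simp
  define r where "r = (x + cc n * (if odd x then 1 else 0)) mod mm n"
  define h where "h = (if mm n \<le> x then 1 else 0::nat)"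
  have e2: "gA n x = r + mm n * h" 
  proof (cases "x < mm n")
    case True
    then show ?thesis unfolding r_def h_def gA_def Let_def OP_def OH_def PP_def HH_def cc_def
      by auto
  next
    case False
    then have "x mod mm n = x - mm n" using assms by (simp add: le_mod_geq)
    moreover have "(x + cc n) mod mm n = (x - mm n + cc n) mod mm n" using False
      by (metis add_diff_assoc2 le_mod_geq mod_add_left_eq not_less)
    ultimately show ?thesis using False assms unfolding r_def h_def gA_def Let_def OP_def OH_def PP_def HH_def cc_def
      by (auto simp: ev)
  qed
  have rl: "r < mm n" unfolding r_def using mk by blast
  show "gA n x < 2 * mm n" using e2 rl unfolding h_def by auto
  show "gA n x mod mm n = (x + cc n * (if odd x then 1 else 0)) mod mm n"
    using e2 rl unfolding r_def by simp
  show "(mm n \<le> gA n x) = (mm n \<le> x)" using e2 rl unfolding h_def by auto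
  have "odd (gA n x) = odd r" using e2 m unfolding h_def by auto
  also have "\<dots> = odd (x + cc n * (if odd x then 1 else 0))" unfolding r_def using m by (simp add: dvd_mod_iff)
  also have "\<dots> = odd x" using m by auto
  finally show "odd (gA n x) = odd x" .
qed

lemma gM_iff:
  assumes "3 \<le> n" "a < 2*mm n" "b < 2*mm n"
  shows "(a, b) \<in> gM n \<longleftrightarrow>
    (odd a \<and> \<not> mm n \<le> a \<and> mm n \<le> b) \<or>
    (odd a \<and> mm n \<le> a \<and> ((odd b \<and> \<not> mm n \<le> b) \<or> (even b \<and> mm n \<le> b))) \<or>
    (even a \<and> mm n \<le> a \<and> odd b)"
proof -
  have ev: "2^n = 2 * mm n" using basics[OF assms(1)] by simp
  show ?thesis using assms unfolding gM_def OP_def OH_def EH_def PP_def HH_def ev by auto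
qed

lemma modc:
  assumes "3 \<le> n" "(k1::nat) mod 2 = k2 mod 2"
  shows "(S + cc n * k1) mod mm n = (S + cc n * k2) mod mm n"
proof -
  have m: "mm n = 2 * cc n" using basics[OF assms(1)] by auto
  have "\<And>k. (S + cc n * k) mod mm n = (S + cc n * (k mod 2)) mod mm n"
  proof -
    fix k :: nat
    have k: "cc n * k = cc n * (k mod 2 + 2 * (k div 2))" by (simp only: mod_mult_div_eq)
    have k2: "cc n * k = cc n * (k mod 2) + (cc n * 2) * (k div 2)"
      using k by (simp only: add_mult_distrib2 mult.assoc)
    have "S + cc n * k = (S + cc n * (k mod 2)) + mm n * (k div 2)"
      using k2 m by simp
    then show "(S + cc n * k) mod mm n = (S + cc n * (k mod 2)) mod mm n" by (metis mod_mult_self2)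
  qed
  then show ?thesis using assms(2) by metis
qed

lemma ggyr_props:
  assumes "3 \<le> n" "a < 2*mm n" "b < 2*mm n" "x < 2*mm n"
  shows "ggyr n a b x < 2 * mm n"
    "ggyr n a b x mod mm n = (x + cc n * (if (a,b) \<in> gM n \<and> odd x then 1 else 0)) mod mm n"
    "(mm n \<le> ggyr n a b x) = (mm n \<le> x)"
    "odd (ggyr n a b x) = odd x"
  using gA_props[OF assms(1,4)] assms by (auto simp: ggyr_def)

lemma mA: "((a::nat) + y mod m + k) mod m = (a + y + k) mod m"
  by (metis add.commute add.left_commute mod_add_left_eq)
lemma mB: "((a::nat) mod m + y mod m + k) mod m = (a + y + k) mod m"
  by (metis add.commute add.left_commute mod_add_left_eq)

lemma mC: "((y::nat) + k) mod m = (y mod m + k) mod m"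
  by (simp add: mod_add_left_eq)

lemma gyroassoc:
  assumes n: "3 \<le> n" and ab: "a < 2*mm n" "b < 2*mm n" "x < 2*mm n"
  shows "goplus n a (goplus n b x) = goplus n (goplus n a b) (ggyr n a b x)"
proof -
  let ?m = "mm n" and ?c = "cc n"
  define y where "y = goplus n b x"
  define z where "z = goplus n a b"
  define g where "g = ggyr n a b x"
  note Y = gop_props[OF n ab(2,3), folded y_def]
  note Z = gop_props[OF n ab(1,2), folded z_def]
  note G = ggyr_props[OF n ab, folded g_def]
  note L = gop_props[OF n ab(1) Y(1)]
  note R = gop_props[OF n Z(1) G(1)]
  define d1 where "d1 = (if ?m \<le> b \<and> even b \<and> odd x then 1 else 0::nat)"
  define d2 where "d2 = (if ?m \<le> a \<and> even a \<and> odd y then 1 else 0::nat)"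
  define d3 where "d3 = (if ?m \<le> a \<and> even a \<and> odd b then 1 else 0::nat)"
  define d4 where "d4 = (if ?m \<le> z \<and> even z \<and> odd g then 1 else 0::nat)"
  define d5 where "d5 = (if (a,b) \<in> gM n \<and> odd x then 1 else 0::nat)"
  have "goplus n a y mod ?m = (a + y + ?c * d2) mod ?m" using L(2) unfolding d2_def by simp
  also have "\<dots> = (a + y mod ?m + ?c * d2) mod ?m" by (rule mA[symmetric])
  also have "\<dots> = (a + (b + x + ?c * d1) mod ?m + ?c * d2) mod ?m" using Y(2) unfolding d1_def by simp
  also have "\<dots> = (a + (b + x + ?c * d1) + ?c * d2) mod ?m" by (rule mA)
  also have "\<dots> = (a + b + x + ?c * (d1 + d2)) mod ?m" by (simp add: algebra_simps)
  finally have l: "goplus n a y mod ?m = (a + b + x + ?c * (d1 + d2)) mod ?m" .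
  have "goplus n z g mod ?m = (z + g + ?c * d4) mod ?m" using R(2) unfolding d4_def by simp
  also have "\<dots> = (z mod ?m + g mod ?m + ?c * d4) mod ?m" by (rule mB[symmetric])
  also have "\<dots> = ((a + b + ?c * d3) mod ?m + (x + ?c * d5) mod ?m + ?c * d4) mod ?m"
    using Z(2) G(2) unfolding d3_def d5_def by simp
  also have "\<dots> = ((a + b + ?c * d3) + (x + ?c * d5) + ?c * d4) mod ?m" by (rule mB)
  also have "\<dots> = (a + b + x + ?c * (d3 + d4 + d5)) mod ?m" by (simp add: algebra_simps)
  finally have r: "goplus n z g mod ?m = (a + b + x + ?c * (d3 + d4 + d5)) mod ?m" .
  have Ye: "even y \<longleftrightarrow> (odd b = odd x)" using Y(4) by auto
  have Ze: "even z \<longleftrightarrow> (odd a = odd b)" using Z(4) by auto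
  have Ge: "even g \<longleftrightarrow> even x" using G(4) by auto
  have par: "(d1 + d2) mod 2 = (d3 + d4 + d5) mod 2"
    unfolding d1_def d2_def d3_def d4_def d5_def Y(4) Z(3) Z(4) G(4) Ye Ze Ge gM_iff[OF n ab(1,2)]
    by (cases "?m \<le> a"; cases "?m \<le> b"; cases "odd a"; cases "odd b"; cases "odd x") auto
  have "goplus n a y mod ?m = goplus n z g mod ?m" using l r modc[OF n par] by simp
  moreover have "(?m \<le> goplus n a y) = (?m \<le> goplus n z g)"
    using L(3) R(3) Y(3) Z(3) G(3) by auto
  ultimately have "goplus n a y = goplus n z g" using eq2 L(1) R(1) by blast
  then show ?thesis unfolding y_def z_def g_def .
qed

lemma loop_gM:
  assumes n: "3 \<le> n" and ab: "a < 2*mm n" "b < 2*mm n"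
  shows "(goplus n a b, b) \<in> gM n \<longleftrightarrow> (a, b) \<in> gM n"
proof -
  note Z = gop_props[OF n ab]
  have Ze: "even (goplus n a b) \<longleftrightarrow> (odd a = odd b)" using Z(4) by auto
  show ?thesis unfolding gM_iff[OF n Z(1) ab(2)] gM_iff[OF n ab] Z(3) Z(4) Ze
    by (cases "mm n \<le> a"; cases "mm n \<le> b"; cases "odd a"; cases "odd b") auto
qed

lemma loop:
  assumes n: "3 \<le> n" and ab: "a < 2*mm n" "b < 2*mm n"
  shows "ggyr n (goplus n a b) b = ggyr n a b"
  using loop_gM[OF assms] by (simp add: ggyr_def)

lemma gA_hom:
  assumes n: "3 \<le> n" and ab: "x < 2*mm n" "y < 2*mm n"
  shows "gA n (goplus n x y) = goplus n (gA n x) (gA n y)"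
proof -
  let ?m = "mm n" and ?c = "cc n"
  note Z = gop_props[OF n ab]
  note X = gA_props[OF n ab(1)]
  note Y = gA_props[OF n ab(2)]
  note L = gA_props[OF n Z(1)]
  note R = gop_props[OF n X(1) Y(1)]
  define d1 where "d1 = (if ?m \<le> x \<and> even x \<and> odd y then 1 else 0::nat)"
  define d2 where "d2 = (if odd (goplus n x y) then 1 else 0::nat)"
  define d3 where "d3 = (if odd x then 1 else 0::nat)"
  define d4 where "d4 = (if odd y then 1 else 0::nat)"
  define d5 where "d5 = (if ?m \<le> gA n x \<and> even (gA n x) \<and> odd (gA n y) then 1 else 0::nat)"
  have "gA n (goplus n x y) mod ?m = (goplus n x y + ?c * d2) mod ?m" using L(2) unfolding d2_def by simp
  also have "\<dots> = (0 + goplus n x y mod ?m + ?c * d2) mod ?m" using mC by simp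
  also have "\<dots> = ((x + y + ?c * d1) mod ?m + ?c * d2) mod ?m" using Z(2) unfolding d1_def by simp
  also have "\<dots> = (0 + (x + y + ?c * d1) mod ?m + ?c * d2) mod ?m" by simp
  also have "\<dots> = (x + y + ?c * (d1 + d2)) mod ?m" unfolding mA by (simp add: algebra_simps)
  finally have l: "gA n (goplus n x y) mod ?m = (x + y + ?c * (d1 + d2)) mod ?m" .
  have "goplus n (gA n x) (gA n y) mod ?m = (gA n x + gA n y + ?c * d5) mod ?m" using R(2) unfolding d5_def by simp
  also have "\<dots> = (gA n x mod ?m + gA n y mod ?m + ?c * d5) mod ?m" by (rule mB[symmetric])
  also have "\<dots> = ((x + ?c * d3) mod ?m + (y + ?c * d4) mod ?m + ?c * d5) mod ?m"
    using X(2) Y(2) unfolding d3_def d4_def by simp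
  also have "\<dots> = ((x + ?c * d3) + (y + ?c * d4) + ?c * d5) mod ?m" by (rule mB)
  also have "\<dots> = (x + y + ?c * (d3 + d4 + d5)) mod ?m" by (simp add: algebra_simps)
  finally have r: "goplus n (gA n x) (gA n y) mod ?m = (x + y + ?c * (d3 + d4 + d5)) mod ?m" .
  have Xe: "even (gA n x) \<longleftrightarrow> even x" using X(4) by auto
  have Ze: "even (goplus n x y) \<longleftrightarrow> (odd x = odd y)" using Z(4) by auto
  have par: "(d1 + d2) mod 2 = (d3 + d4 + d5) mod 2"
    unfolding d1_def d2_def d3_def d4_def d5_def X(3) X(4) Y(4) Xe Z(4)
    by (cases "?m \<le> x"; cases "?m \<le> y"; cases "odd x"; cases "odd y") auto
  have "gA n (goplus n x y) mod ?m = goplus n (gA n x) (gA n y) mod ?m" using l r modc[OF n par] by simp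
  moreover have "(?m \<le> gA n (goplus n x y)) = (?m \<le> goplus n (gA n x) (gA n y))"
    using L(3) R(3) Z(3) X(3) Y(3) by auto
  ultimately show ?thesis using eq2 L(1) R(1) by blast
qed

lemma gA_inv:
  assumes n: "3 \<le> n" and x: "x < 2*mm n"
  shows "gA n (gA n x) = x"
proof -
  note X = gA_props[OF n x]
  note Y = gA_props[OF n X(1)]
  have "gA n (gA n x) mod mm n = (0 + gA n x mod mm n + cc n * (if odd x then 1 else 0)) mod mm n"
    using Y(2) X(4) mC by simp
  also have "\<dots> = (0 + (x + cc n * (if odd x then 1 else 0)) mod mm n + cc n * (if odd x then 1 else 0)) mod mm n"
    using X(2) by simp
  also have "\<dots> = (x + cc n * ((if odd x then 1 else 0) + (if odd x then 1 else 0))) mod mm n"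
    unfolding mA by (simp add: algebra_simps)
  also have "\<dots> = (x + cc n * 0) mod mm n" by (rule modc[OF n]) auto
  finally have "gA n (gA n x) mod mm n = x mod mm n" by simp
  then show ?thesis using eq2 Y(1) x Y(3) X(3) by blast
qed

lemma zero_op:
  assumes n: "3 \<le> n" and x: "x < 2*mm n"
  shows "goplus n 0 x = x"
proof -
  have p: "0 < mm n" using basics[OF n] by simp
  note Z = gop_props[OF n _ x, of 0]
  have "goplus n 0 x mod mm n = x mod mm n" using Z(2) p by simp
  moreover have "(mm n \<le> goplus n 0 x) = (mm n \<le> x)" using Z(3) p by simp
  ultimately show ?thesis using eq2 Z(1) x p by auto
qed

definition pwN :: "nat \<Rightarrow> nat \<Rightarrow> nat \<Rightarrow> nat" where
  "pwN n g k = (k * g) mod mm n + mm n * ((k * (g div mm n)) mod 2)"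

lemma pw_props:
  assumes n: "3 \<le> n" and g: "g < 2 * mm n"
  shows "pwN n g k < 2 * mm n" "pwN n g k mod mm n = (k * g) mod mm n"
    "(mm n \<le> pwN n g k) = (mm n \<le> g \<and> odd k)"
    "odd (pwN n g k) = (odd k \<and> odd g)"
proof -
  have m: "mm n = 2 * cc n" "even (cc n)" "2 \<le> cc n" using basics[OF n] by auto
  have p: "0 < mm n" using m by simp
  define r where "r = (k * g) mod mm n"
  define h where "h = (if mm n \<le> g \<and> odd k then 1 else 0::nat)"
  have hh: "(k * (g div mm n)) mod 2 = h" using g unfolding h_def by (auto simp: hi odd_iff_mod_2_eq_one)
  have e: "pwN n g k = r + mm n * h" unfolding pwN_def r_def hh ..
  have rl: "r < mm n" unfolding r_def using p by simp
  show "pwN n g k < 2 * mm n" using e rl unfolding h_def by auto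
  show "pwN n g k mod mm n = (k * g) mod mm n" using e rl unfolding r_def by simp
  show "(mm n \<le> pwN n g k) = (mm n \<le> g \<and> odd k)" using e rl unfolding h_def by auto
  have "odd (pwN n g k) = odd r" using e m unfolding h_def by auto
  also have "\<dots> = odd (k * g)" unfolding r_def using m by (simp add: dvd_mod_iff)
  finally show "odd (pwN n g k) = (odd k \<and> odd g)" by simp
qed

lemma pw_step:
  assumes n: "3 \<le> n" and g: "g < 2 * mm n"
  shows "goplus n (pwN n g k) g = pwN n g (Suc k)"
proof -
  note P = pw_props[OF n g, of k]
  note Q = pw_props[OF n g, of "Suc k"]
  note Z = gop_props[OF n P(1) g]
  have d: "\<not> (mm n \<le> pwN n g k \<and> even (pwN n g k) \<and> odd g)" using P(3) P(4) by auto
  have "goplus n (pwN n g k) g mod mm n = (pwN n g k + g) mod mm n" using Z(2) d by simp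
  also have "\<dots> = (pwN n g k mod mm n + g) mod mm n" by (rule mC)
  also have "\<dots> = (k * g + g) mod mm n" using P(2) mC by metis
  finally have "goplus n (pwN n g k) g mod mm n = pwN n g (Suc k) mod mm n" using Q(2) by (simp add: add.commute)
  moreover have "(mm n \<le> goplus n (pwN n g k) g) = (mm n \<le> pwN n g (Suc k))"
    using Z(3) P(3) Q(3) by auto
  ultimately show ?thesis using eq2 Z(1) Q(1) by blast
qed

lemma pw_1: assumes "g < 2 * mm n" shows "pwN n g 1 = g"
proof -
  have "(g div mm n) mod 2 = g div mm n" using assms by (simp add: hi)
  then show ?thesis by (simp add: pwN_def mod_mult_div_eq)
qed

lemma pw_2m: assumes n: "3 \<le> n" and "g < 2 * mm n" shows "pwN n g (2 * mm n) = 0"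
  by (simp add: pwN_def)

lemma pw_in:
  assumes n: "3 \<le> n" and sub: "H \<subseteq> {..<2 * mm n}" and cl: "\<forall>a\<in>H. \<forall>b\<in>H. goplus n a b \<in> H"
    and g: "g \<in> H"
  shows "pwN n g (Suc k) \<in> H"
proof (induction k)
  case 0
  have "g < 2 * mm n" using g sub by auto
  then show ?case using pw_1 g by simp
next
  case (Suc k)
  have gl: "g < 2 * mm n" using g sub by auto
  have "goplus n (pwN n g (Suc k)) g \<in> H" using cl Suc g by blast
  then show ?case using pw_step[OF n gl] by simp
qed

lemma zero_in:
  assumes n: "3 \<le> n" and sub: "H \<subseteq> {..<2 * mm n}" and cl: "\<forall>a\<in>H. \<forall>b\<in>H. goplus n a b \<in> H"
    and g: "g \<in> H"
  shows "0 \<in> H"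
proof -
  have gl: "g < 2 * mm n" using g sub by auto
  have "2 * mm n = Suc (2 * mm n - 1)" using basics[OF n] by simp
  then show ?thesis using pw_in[OF n sub cl g, of "2 * mm n - 1"] pw_2m[OF n gl] by simp
qed

lemma G2_eq: "3 \<le> n \<Longrightarrow> G2 n = {..<2 * mm n}"
  using basics by (simp add: G2_def)

lemma sg_intro:
  assumes n: "3 \<le> n" and sub: "H \<subseteq> {..<2 * mm n}" and ne: "H \<noteq> {}"
    and cl: "\<forall>a\<in>H. \<forall>b\<in>H. goplus n a b \<in> H"
    and gy: "\<forall>a\<in>H. \<forall>b\<in>H. \<forall>x\<in>H. ggyr n a b x \<in> H"
  shows "subgyrogroup n H"
proof -
  have lt: "\<And>x. x \<in> H \<Longrightarrow> x < 2 * mm n" using sub by auto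
  obtain g where g: "g \<in> H" using ne by auto
  have z: "0 \<in> H" using zero_in[OF n sub cl g] .
  have inv: "\<exists>b\<in>H. goplus n b a = 0" if a: "a \<in> H" for a
  proof -
    have e: "2 * mm n - 1 = Suc (2 * mm n - 2)" "Suc (2 * mm n - 1) = 2 * mm n" using basics[OF n] by auto
    have "pwN n a (2 * mm n - 1) \<in> H" using pw_in[OF n sub cl a, of "2 * mm n - 2"] e by simp
    moreover have "goplus n (pwN n a (2 * mm n - 1)) a = 0"
      using pw_step[OF n lt[OF a], of "2 * mm n - 1"] e pw_2m[OF n lt[OF a]] by simp
    ultimately show ?thesis by blast
  qed
  have aut: "is_aut_on H (goplus n) (ggyr n a b)" if ab: "a \<in> H" "b \<in> H" for a b
  proof -
    have invo: "ggyr n a b (ggyr n a b x) = x" if "x \<in> H" for x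
      using gA_inv[OF n lt[OF that]] by (simp add: ggyr_def)
    have bij: "bij_betw (ggyr n a b) H H"
      by (rule bij_betw_byWitness[where f'="ggyr n a b"]) (use invo gy ab in auto)
    have hom: "ggyr n a b (goplus n x y) = goplus n (ggyr n a b x) (ggyr n a b y)" if "x \<in> H" "y \<in> H" for x y
      using gA_hom[OF n lt[OF that(1)] lt[OF that(2)]] by (simp add: ggyr_def)
    show ?thesis unfolding is_aut_on_def using bij hom by blast
  qed
  have "gyrogroup_on H (goplus n)"
    unfolding gyrogroup_on_def
  proof (intro conjI)
    show "H \<noteq> {}" by fact
    show "\<forall>a\<in>H. \<forall>b\<in>H. goplus n a b \<in> H" by fact
    show "\<exists>e\<in>H. (\<forall>a\<in>H. goplus n e a = a) \<and> (\<forall>a\<in>H. \<exists>b\<in>H. goplus n b a = e)"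
      using z inv zero_op[OF n] lt by blast
    show "\<exists>gyr. (\<forall>a\<in>H. \<forall>b\<in>H. \<forall>c\<in>H. goplus n a (goplus n b c) = goplus n (goplus n a b) (gyr a b c)) \<and>
            (\<forall>a\<in>H. \<forall>b\<in>H. is_aut_on H (goplus n) (gyr a b)) \<and>
            (\<forall>a\<in>H. \<forall>b\<in>H. \<forall>c\<in>H. gyr (goplus n a b) b c = gyr a b c)"
      by (rule exI[of _ "ggyr n"]) (use gyroassoc[OF n] aut loop[OF n] lt in auto)
  qed
  then show ?thesis unfolding subgyrogroup_def using ne sub aut G2_eq[OF n] by auto
qed

definition F1 :: "nat \<Rightarrow> nat \<Rightarrow> nat set" where "F1 n s = {x. x < mm n \<and> 2 ^ s dvd x}"
definition F2 :: "nat \<Rightarrow> nat \<Rightarrow> nat set" where "F2 n s = {x. x < 2 * mm n \<and> 2 ^ s dvd x}"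
definition F3 :: "nat \<Rightarrow> nat \<Rightarrow> nat set" where
  "F3 n s = {x. x < 2 * mm n \<and> x mod 2 ^ Suc s = (if mm n \<le> x then 2 ^ s else 0)}"

lemma pow_dvd_mm: assumes "3 \<le> n" "s \<le> n - 1" shows "2 ^ s dvd mm n"
  using assms by (simp add: mm_def le_imp_power_dvd)

lemma cycP_F1: assumes n: "3 \<le> n" "s \<le> n - 1" shows "cycP n s = F1 n s"
proof -
  have d: "2 ^ s dvd mm n" by (rule pow_dvd_mm[OF n])
  have p: "0 < mm n" using basics[OF n(1)] by simp
  show ?thesis
  proof
    show "cycP n s \<subseteq> F1 n s" unfolding cycP_def F1_def using d p by (auto simp: dvd_mod_iff)
    show "F1 n s \<subseteq> cycP n s"
    proof
      fix x assume "x \<in> F1 n s"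
      then have x: "x < mm n" "2 ^ s dvd x" unfolding F1_def by auto
      then have "x = (x div 2 ^ s * 2 ^ s) mod mm n" by simp
      then show "x \<in> cycP n s" unfolding cycP_def by blast
    qed
  qed
qed

lemma odd_mod_pow: "odd (x mod 2 ^ Suc s) = odd (x::nat)"
  by (simp add: dvd_mod_iff)

lemma F_sub: "F1 n s \<subseteq> {..<2 * mm n}" "F2 n s \<subseteq> {..<2 * mm n}" "F3 n s \<subseteq> {..<2 * mm n}"
  unfolding F1_def F2_def F3_def by auto

lemma F_zero: "0 \<in> F1 n s" "0 < mm n \<Longrightarrow> 0 \<in> F2 n s" "0 < mm n \<Longrightarrow> 0 \<in> F3 n s"
  unfolding F1_def F2_def F3_def by (auto simp: mm_def)

lemma F1_cl: assumes n: "3 \<le> n" "s \<le> n - 1" and ab: "a \<in> F1 n s" "b \<in> F1 n s"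
  shows "goplus n a b \<in> F1 n s"
proof -
  have d: "2 ^ s dvd mm n" by (rule pow_dvd_mm[OF n])
  have p: "0 < mm n" using basics[OF n(1)] by simp
  have l: "a < mm n" "b < mm n" "2^s dvd a" "2^s dvd b" using ab unfolding F1_def by auto
  have "goplus n a b = (a + b) mod mm n" using gop[OF n(1), of a b] l by simp
  then show ?thesis unfolding F1_def using l d p by (simp add: dvd_mod_iff)
qed

lemma F2_cl: assumes n: "3 \<le> n" "s \<le> n - 1" and ab: "a \<in> F2 n s" "b \<in> F2 n s"
  shows "goplus n a b \<in> F2 n s"
proof (cases "s = 0")
  case True
  then show ?thesis using gop_props[OF n(1)] ab unfolding F2_def by auto
next
  case False
  have d: "2 ^ s dvd mm n" by (rule pow_dvd_mm[OF n])
  have l: "a < 2 * mm n" "b < 2 * mm n" "2^s dvd a" "2^s dvd b" using ab unfolding F2_def by auto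
  have "even a" "even b" using l(3,4) False by (auto simp: dvd_power_le dvd_trans[of 2 "2^s"])
  then have "goplus n a b = (a + b) mod mm n + mm n * ((a div mm n + b div mm n) mod 2)"
    using gop[OF n(1) l(1,2)] by simp
  moreover have "2 ^ s dvd (a + b) mod mm n" using d l by (simp add: dvd_mod_iff)
  ultimately show ?thesis unfolding F2_def using gop_props[OF n(1) l(1,2)] d by simp
qed

lemma F3_cl: assumes n: "3 \<le> n" "s \<le> n - 2" and ab: "a \<in> F3 n s" "b \<in> F3 n s"
  shows "goplus n a b \<in> F3 n s"
proof -
  have d: "2 ^ Suc s dvd mm n" using pow_dvd_mm[OF n(1), of "Suc s"] n by simp
  have l: "a < 2 * mm n" "b < 2 * mm n" "a mod 2 ^ Suc s = (if mm n \<le> a then 2 ^ s else 0)"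
     "b mod 2 ^ Suc s = (if mm n \<le> b then 2 ^ s else 0)" using ab unfolding F3_def by auto
  note Z = gop_props[OF n(1) l(1,2)]
  have nd: "\<not> (mm n \<le> a \<and> even a \<and> odd b)"
  proof
    assume h: "mm n \<le> a \<and> even a \<and> odd b"
    then have "even (a mod 2 ^ Suc s)" using odd_mod_pow by blast
    then have "s \<noteq> 0" using l(3) h by auto
    moreover have "odd (b mod 2 ^ Suc s)" using odd_mod_pow h by blast
    ultimately show False using l(4) by (auto split: if_splits)
  qed
  have "goplus n a b mod 2 ^ Suc s = (goplus n a b mod mm n) mod 2 ^ Suc s"
    using d by (simp add: mod_mod_cancel)
  also have "\<dots> = (a + b) mod 2 ^ Suc s" using Z(2) nd d by (simp add: mod_mod_cancel)
  also have "\<dots> = (a mod 2 ^ Suc s + b mod 2 ^ Suc s) mod 2 ^ Suc s" by (simp add: mod_add_eq)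
  also have "\<dots> = (if mm n \<le> goplus n a b then 2 ^ s else 0)" unfolding l(3,4) Z(3) by (auto simp: mult_2[symmetric])
  finally show ?thesis unfolding F3_def using Z(1) by simp
qed

definition nice :: "nat \<Rightarrow> nat set \<Rightarrow> bool" where
  "nice n H \<longleftrightarrow> (\<forall>a\<in>H. \<forall>b\<in>H. (a, b) \<notin> gM n)"

lemma F1_nice: "3 \<le> n \<Longrightarrow> nice n (F1 n s)"
  unfolding nice_def F1_def using gM_iff by auto

lemma F2_nice: assumes "3 \<le> n" "s \<noteq> 0" shows "nice n (F2 n s)"
proof -
  have "even x" if "x \<in> F2 n s" for x
    using that assms(2) unfolding F2_def by (auto simp: dvd_power_le dvd_trans[of 2 "2^s"])
  then show ?thesis unfolding nice_def using gM_iff[OF assms(1)] F_sub(2) by blast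
qed

lemma F3_nice: assumes n: "3 \<le> n" shows "nice n (F3 n s)"
proof (cases "s = 0")
  case True
  have "odd x \<longleftrightarrow> mm n \<le> x" if "x \<in> F3 n s" for x
    using that True odd_mod_pow[of x 0] unfolding F3_def by (auto split: if_splits)
  then show ?thesis unfolding nice_def using gM_iff[OF n] F_sub(3) by blast
next
  case False
  have "even x" if "x \<in> F3 n s" for x
  proof -
    have "even (x mod 2 ^ Suc s)" using that False unfolding F3_def by auto
    then show ?thesis using odd_mod_pow by blast
  qed
  then show ?thesis unfolding nice_def using gM_iff[OF assms(1)] F_sub(3) by blast
qed

lemma nice_sg:
  assumes n: "3 \<le> n" and sub: "H \<subseteq> {..<2 * mm n}" and ne: "H \<noteq> {}"
    and cl: "\<forall>a\<in>H. \<forall>b\<in>H. goplus n a b \<in> H" and ni: "nice n H"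
  shows "subgyrogroup n H" "subgroup_G2 n H"
proof -
  have gy: "\<forall>a\<in>H. \<forall>b\<in>H. \<forall>x\<in>H. ggyr n a b x = x" using ni unfolding nice_def ggyr_def by auto
  show s: "subgyrogroup n H" by (rule sg_intro[OF n sub ne cl]) (use gy in auto)
  have "goplus n a (goplus n b c) = goplus n (goplus n a b) c" if "a \<in> H" "b \<in> H" "c \<in> H" for a b c
    using gyroassoc[OF n, of a b c] that sub gy by auto
  then show "subgroup_G2 n H" unfolding subgroup_G2_def using s gy by blast
qed

lemma sg_closed:
  assumes n: "3 \<le> n" and "subgyrogroup n H"
  shows "H \<subseteq> {..<2 * mm n}" "H \<noteq> {}" "\<forall>a\<in>H. \<forall>b\<in>H. goplus n a b \<in> H"
  using assms unfolding subgyrogroup_def gyrogroup_on_def G2_eq[OF n] by auto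

lemma gen_eq:
  assumes "subgyrogroup n S" "X \<subseteq> S" "\<And>H. subgyrogroup n H \<Longrightarrow> X \<subseteq> H \<Longrightarrow> S \<subseteq> H"
  shows "gen n X = S"
  unfolding gen_def using assms by blast

lemma P_in:
  assumes n: "3 \<le> n" and sub: "H \<subseteq> {..<2 * mm n}" and cl: "\<forall>a\<in>H. \<forall>b\<in>H. goplus n a b \<in> H"
    and g: "g \<in> H" "g < mm n" and q: "q < mm n" "g dvd q"
  shows "q \<in> H"
proof (cases "q = 0")
  case True
  then show ?thesis using zero_in[OF n sub cl g(1)] by simp
next
  case False
  obtain j where j: "q = j * g" using q(2) by (metis dvd_def mult.commute)
  then have "j \<noteq> 0" using False by auto
  then have js: "j = Suc (j - 1)" by simp
  have "pwN n g j = q" unfolding pwN_def using g(2) q(1) j by simp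
  then show ?thesis using pw_in[OF n sub cl g(1), of "j - 1"] js by simp
qed

lemma add_m:
  assumes n: "3 \<le> n" and q: "q < mm n"
  shows "goplus n q (mm n) = q + mm n"
  using gop[OF n, of q "mm n"] q by simp

lemma low_in:
  assumes n: "3 \<le> n" and sub: "H \<subseteq> {..<2 * mm n}" and cl: "\<forall>a\<in>H. \<forall>b\<in>H. goplus n a b \<in> H"
    and g: "2 ^ s \<in> H" and s: "s \<le> n - 1" and x: "x < mm n" "2 ^ s dvd x"
  shows "x \<in> H"
proof (cases "2 ^ s < mm n")
  case True
  show ?thesis by (rule P_in[OF n sub cl g True x])
next
  case False
  have "2 ^ s \<le> mm n" using pow_dvd_mm[OF n s] dvd_imp_le basics[OF n] by simp
  then have "2 ^ s = mm n" using False by simp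
  then have "x = 0" using x by (metis dvd_imp_le not_less neq0_conv)
  then show ?thesis using zero_in[OF n sub cl g] by simp
qed

lemma gen_F2:
  assumes n: "3 \<le> n" and s: "s \<le> n - 1"
  shows "gen n {2 ^ s, mm n} = F2 n s"
proof (rule gen_eq)
  have p: "0 < mm n" using basics[OF n] by simp
  show "subgyrogroup n (F2 n s)"
  proof (cases "s = 0")
    case True
    have ne: "F2 n s \<noteq> {}" using F_zero(2)[OF p] by blast
    show ?thesis
      by (rule sg_intro[OF n F_sub(2) ne]) (use F2_cl[OF n s] True ggyr_props(1)[OF n] in \<open>auto simp: F2_def\<close>)
  next
    case False
    show ?thesis using nice_sg(1)[OF n F_sub(2) _ _ F2_nice[OF n False]] F_zero(2)[OF p] F2_cl[OF n s] by blast
  qed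
  have "2 ^ s \<le> mm n" using pow_dvd_mm[OF n s] dvd_imp_le basics[OF n] by simp
  then show "{2 ^ s, mm n} \<subseteq> F2 n s" unfolding F2_def using pow_dvd_mm[OF n s] p by auto
next
  fix H assume H: "subgyrogroup n H" "{2 ^ s, mm n} \<subseteq> H"
  note C = sg_closed[OF n H(1)]
  show "F2 n s \<subseteq> H"
  proof
    fix x assume "x \<in> F2 n s"
    then have x: "x < 2 * mm n" "2 ^ s dvd x" unfolding F2_def by auto
    show "x \<in> H"
    proof (cases "x < mm n")
      case True
      then show ?thesis using low_in[OF n C(1) C(3) _ s True x(2)] H(2) by auto
    next
      case False
      have "2 ^ s dvd x - mm n" using x(2) pow_dvd_mm[OF n s] by (simp add: dvd_diff_nat)
      then have "x - mm n \<in> H" using low_in[OF n C(1) C(3) _ s, of "x - mm n"] H(2) x(1) False by auto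
      then have "goplus n (x - mm n) (mm n) \<in> H" using C(3) H(2) by auto
      then show ?thesis using add_m[OF n, of "x - mm n"] x(1) False by simp
    qed
  qed
qed

lemma pw_hi:
  assumes "mm n \<le> g" "g < 2 * mm n"
  shows "pwN n g k = (k * (g - mm n)) mod mm n + mm n * (k mod 2)"
proof -
  have "k * g = k * (g - mm n) + mm n * k" using assms(1) by (simp add: algebra_simps)
  then have "(k * g) mod mm n = (k * (g - mm n)) mod mm n" by simp
  moreover have "g div mm n = 1" using assms by (simp add: hi)
  ultimately show ?thesis unfolding pwN_def by simp
qed

lemma lt_pow: "2 ^ Suc s \<le> (m::nat) \<Longrightarrow> 2 ^ s < m"
  using less_le_trans[of "2^s" "2^Suc s" m] by simp

lemma gen_F3:
  assumes n: "3 \<le> n" and s: "s \<le> n - 2"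
  shows "gen n {mm n + 2 ^ s} = F3 n s"
proof (rule gen_eq)
  have p: "0 < mm n" using basics[OF n] by simp
  have d: "2 ^ Suc s dvd mm n" using pow_dvd_mm[OF n, of "Suc s"] s n by simp
  have lt: "2 ^ s < mm n" using dvd_imp_le[OF d p] lt_pow by blast
  show "subgyrogroup n (F3 n s)"
    using nice_sg(1)[OF n F_sub(3) _ _ F3_nice[OF n]] F_zero(3)[OF p] F3_cl[OF n s] by blast
  have "mm n mod 2 ^ Suc s = 0" using d by simp
  then have "(mm n + 2 ^ s) mod 2 ^ Suc s = (0 + 2 ^ s) mod 2 ^ Suc s" by (metis mod_add_left_eq)
  then have "(mm n + 2 ^ s) mod 2 ^ Suc s = 2 ^ s" by simp
  then show "{mm n + 2 ^ s} \<subseteq> F3 n s" unfolding F3_def using lt by auto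
next
  fix H assume H: "subgyrogroup n H" "{mm n + 2 ^ s} \<subseteq> H"
  note C = sg_closed[OF n H(1)]
  have p: "0 < mm n" using basics[OF n] by simp
  have d: "2 ^ Suc s dvd mm n" using pow_dvd_mm[OF n, of "Suc s"] s n by simp
  have lt: "2 ^ s < mm n" using dvd_imp_le[OF d p] lt_pow by blast
  define g where "g = mm n + 2 ^ s"
  have g: "g \<in> H" "mm n \<le> g" "g < 2 * mm n" using H(2) lt unfolding g_def by auto
  have pw: "pwN n g k = (k * 2 ^ s) mod mm n + mm n * (k mod 2)" for k
    using pw_hi[OF g(2,3)] unfolding g_def by simp
  show "F3 n s \<subseteq> H"
  proof
    fix x assume "x \<in> F3 n s"
    then have x: "x < 2 * mm n" "x mod 2 ^ Suc s = (if mm n \<le> x then 2 ^ s else 0)" unfolding F3_def by auto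
    show "x \<in> H"
    proof (cases "x < mm n")
      case True
      then have "x mod 2 ^ Suc s = 0" using x(2) by simp
      then obtain j where j: "x = 2 ^ Suc s * j" by auto
      show ?thesis
      proof (cases "j = 0")
        case True
        then show ?thesis using zero_in[OF n C(1) C(3) g(1)] j by simp
      next
        case False
        have "pwN n g (2 * j) = x" unfolding pw using j \<open>x < mm n\<close> by (simp add: algebra_simps)
        moreover have "2 * j = Suc (2 * j - 1)" using False by simp
        ultimately show ?thesis using pw_in[OF n C(1) C(3) g(1), of "2 * j - 1"] by metis
      qed
    next
      case False
      define y where "y = x - mm n"
      have xy: "x = y + mm n" "y < mm n" using False x(1) unfolding y_def by auto
      have "y mod 2 ^ Suc s = x mod 2 ^ Suc s" using d unfolding xy(1) by (metis dvd_imp_mod_0 mod_add_right_eq add_0_right)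
      then have ym: "y mod 2 ^ Suc s = 2 ^ s" using x(2) False by simp
      define j where "j = y div 2 ^ Suc s"
      have yj: "y = (2 * j + 1) * 2 ^ s" using ym div_mult_mod_eq[of y "2 ^ Suc s"] unfolding j_def
        by (simp add: algebra_simps)
      have "pwN n g (Suc (2 * j)) = x" unfolding pw using yj xy by simp
      then show ?thesis using pw_in[OF n C(1) C(3) g(1), of "2 * j"] by metis
    qed
  qed
qed

lemma mulQ:
  assumes n: "3 \<le> n" and sub: "H \<subseteq> {..<2 * mm n}" and cl: "\<forall>a\<in>H. \<forall>b\<in>H. goplus n a b \<in> H"
    and y: "y \<in> H" "y < mm n"
  shows "(k * y) mod mm n \<in> H"
proof (cases k)
  case 0
  then show ?thesis using zero_in[OF n sub cl y(1)] by simp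
next
  case (Suc k')
  have "pwN n y k = (k * y) mod mm n" unfolding pwN_def using y(2) by simp
  then show ?thesis using pw_in[OF n sub cl y(1), of k'] Suc by simp
qed

lemma negQ:
  assumes n: "3 \<le> n" and sub: "H \<subseteq> {..<2 * mm n}" and cl: "\<forall>a\<in>H. \<forall>b\<in>H. goplus n a b \<in> H"
    and y: "y \<in> H" "y < mm n" "0 < y"
  shows "mm n - y \<in> H"
proof -
  obtain y' where y': "y = Suc y'" using y(3) by (cases y) auto
  have e: "(mm n - 1) * y = (mm n - y) + mm n * y'"
    using y(2) unfolding y' by (simp add: algebra_simps diff_mult_distrib diff_mult_distrib2)
  have "((mm n - 1) * y) mod mm n = (mm n - y) mod mm n" unfolding e by (rule mod_mult_self2)
  then have "((mm n - 1) * y) mod mm n = mm n - y" using y by simp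
  then show ?thesis using mulQ[OF n sub cl y(1,2), of "mm n - 1"] by simp
qed

lemma subQ:
  assumes n: "3 \<le> n" and sub: "H \<subseteq> {..<2 * mm n}" and cl: "\<forall>a\<in>H. \<forall>b\<in>H. goplus n a b \<in> H"
    and a: "a \<in> H" "a < mm n" and b: "b \<in> H" "b \<le> a"
  shows "a - b \<in> H"
proof (cases "b = 0")
  case True
  then show ?thesis using a by simp
next
  case False
  have mb: "mm n - b \<in> H" using negQ[OF n sub cl b(1)] False a(2) b(2) by simp
  have "goplus n (mm n - b) a = (mm n - b + a) mod mm n" 
  proof -
    have "\<not> mm n \<le> mm n - b" using False a(2) b(2) by linarith
    then show ?thesis using gop[OF n, of "mm n - b" a] a(2) by simp
  qed
  also have "\<dots> = (a - b + mm n) mod mm n"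
  proof -
    have "mm n - b + a = a - b + mm n" using a(2) b(2) by linarith
    then show ?thesis by simp
  qed
  also have "\<dots> = a - b" using a(2) by simp
  finally show ?thesis using cl mb a(1) by metis
qed

lemma Q_form:
  assumes n: "3 \<le> n" and sub: "H \<subseteq> {..<2 * mm n}" and ne: "H \<noteq> {}"
    and cl: "\<forall>a\<in>H. \<forall>b\<in>H. goplus n a b \<in> H"
  shows "\<exists>r \<le> n - 1. H \<inter> {..<mm n} = F1 n r"
proof -
  obtain g where g: "g \<in> H" using ne by auto
  have z: "0 \<in> H" using zero_in[OF n sub cl g] .
  have p: "0 < mm n" using basics[OF n] by simp
  have mpow: "mm n = 2 ^ (n - 1)" by (simp add: mm_def)
  define Q' where "Q' = {x \<in> H. x < mm n \<and> x \<noteq> 0}"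
  show ?thesis
  proof (cases "Q' = {}")
    case True
    have "H \<inter> {..<mm n} = {0}" using True z p unfolding Q'_def by auto
    moreover have "F1 n (n - 1) = {0}" unfolding F1_def mpow
      by (auto dest: dvd_imp_le)
    ultimately show ?thesis by auto
  next
    case False
    have fin: "finite Q'" unfolding Q'_def by auto
    define d where "d = Min Q'"
    have dQ: "d \<in> Q'" unfolding d_def using Min_in[OF fin False] .
    have dmin: "\<And>x. x \<in> Q' \<Longrightarrow> d \<le> x" unfolding d_def using Min_le[OF fin] by blast
    have d: "d \<in> H" "d < mm n" "0 < d" using dQ unfolding Q'_def by auto
    have multd: "j * d \<in> H" if "j * d < mm n" for j
      using mulQ[OF n sub cl d(1,2), of j] that by simp
    have dvq: "d dvd q" if q: "q \<in> H" "q < mm n" for q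
    proof -
      have "q - j * d \<in> H" if "j * d \<le> q" for j
        using that
      proof (induction j)
        case 0 then show ?case using q by simp
      next
        case (Suc j)
        have a: "q - j * d \<in> H" using Suc by simp
        have "q - j * d - d \<in> H" by (rule subQ[OF n sub cl a _ d(1)]) (use Suc q in auto)
        then show ?case by (simp add: algebra_simps diff_diff_add)
      qed
      then have "q - q div d * d \<in> H" by (simp add: div_times_less_eq_dividend)
      then have r: "q mod d \<in> H" by (simp add: minus_div_mult_eq_mod)
      have "q mod d < d" using d(3) by simp
      moreover have "q mod d < mm n" using q(2) by (meson le_less_trans mod_less_eq_dividend)
      ultimately have "q mod d = 0" using dmin[of "q mod d"] r unfolding Q'_def by fastforce
      then show ?thesis by auto
    qed
    have dvm: "d dvd mm n"
    proof (rule ccontr)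
      assume nd: "\<not> d dvd mm n"
      define t where "t = mm n div d * d"
      have tl: "t < mm n" unfolding t_def using nd
        by (metis div_times_less_eq_dividend dvd_triv_right le_neq_implies_less)
      have tp: "0 < t" unfolding t_def using d p
        by (metis div_greater_zero_iff less_imp_le_nat nat_0_less_mult_iff)
      have tH: "t \<in> H" using multd tl unfolding t_def by simp
      have "mm n - t \<in> H" using negQ[OF n sub cl tH tl tp] .
      moreover have "mm n - t = mm n mod d" unfolding t_def by (simp add: minus_div_mult_eq_mod)
      moreover have "mm n mod d < d" using d by simp
      moreover have "mm n mod d \<noteq> 0" using nd by (simp add: mod_eq_0_iff_dvd)
      moreover have "mm n mod d < mm n" using p d by (metis less_trans mod_less_divisor)
      ultimately show False using dmin[of "mm n mod d"] unfolding Q'_def by fastforce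
    qed
    obtain r where r: "r \<le> n - 1" "d = 2 ^ r"
      using dvm unfolding mpow using divides_primepow_nat[OF two_is_prime_nat] by blast
    have "H \<inter> {..<mm n} = F1 n r"
    proof
      show "H \<inter> {..<mm n} \<subseteq> F1 n r" unfolding F1_def using dvq r by auto
      show "F1 n r \<subseteq> H \<inter> {..<mm n}" unfolding F1_def
        using P_in[OF n sub cl d(1,2)] r by auto
    qed
    then show ?thesis using r by blast
  qed
qed

lemma mod_pow_half:
  assumes "2 ^ s dvd (y::nat)" "\<not> 2 ^ Suc s dvd y"
  shows "y mod 2 ^ Suc s = 2 ^ s"
proof -
  obtain u where u: "y = 2 ^ s * u" using assms(1) by (auto simp: dvd_def)
  have "odd u" using assms(2) u by auto
  have "y mod 2 ^ Suc s = 2 ^ s * (u mod 2)" unfolding u power_Suc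
    by (metis mult.commute mod_mult_mult1)
  then show ?thesis using \<open>odd u\<close> by (simp add: odd_iff_mod_2_eq_one)
qed

lemma classify:
  assumes n: "3 \<le> n" and sub: "H \<subseteq> {..<2 * mm n}" and ne: "H \<noteq> {}"
    and cl: "\<forall>a\<in>H. \<forall>b\<in>H. goplus n a b \<in> H"
  shows "(\<exists>s \<le> n - 1. H = F1 n s) \<or> (\<exists>s \<le> n - 1. H = F2 n s) \<or> (\<exists>s \<le> n - 2. H = F3 n s)"
proof -
  obtain r where r: "r \<le> n - 1" "H \<inter> {..<mm n} = F1 n r" using Q_form[OF n sub ne cl] by blast
  have QF: "x \<in> H \<longleftrightarrow> 2 ^ r dvd x" if "x < mm n" for x
    using r(2) that unfolding F1_def by blast
  have p: "0 < mm n" using basics[OF n] by simp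
  have drm: "2 ^ r dvd mm n" using pow_dvd_mm[OF n r(1)] .
  have evm: "even (mm n)" using basics[OF n] by simp
  obtain g where g: "g \<in> H" using ne by auto
  have z: "0 \<in> H" using zero_in[OF n sub cl g] .
  have lt: "x < 2 * mm n" if "x \<in> H" for x using sub that by auto
  show ?thesis
  proof (cases "\<forall>x\<in>H. x < mm n")
    case True
    then have "H = F1 n r" using r(2) by auto
    then show ?thesis using r by blast
  next
    case False
    then obtain h0 where h0: "h0 \<in> H" "mm n \<le> h0" by auto
    show ?thesis
    proof (cases "mm n \<in> H")
      case True
      have "H = F2 n r"
      proof
        show "H \<subseteq> F2 n r"
        proof
          fix x assume x: "x \<in> H"
          show "x \<in> F2 n r"
          proof (cases "x < mm n")
            case True then show ?thesis using QF x lt unfolding F2_def by auto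
          next
            case False
            have e: "goplus n x (mm n) = x - mm n"
            proof -
              have "goplus n x (mm n) = (x + mm n) mod mm n" using gop[OF n, of x "mm n"] lt[OF x] False p evm by (simp add: hi)
              also have "\<dots> = x - mm n" using lt[OF x] False by (simp add: le_mod_geq)
              finally show ?thesis .
            qed
            have "x - mm n \<in> H" using cl x True e by metis
            then have "2 ^ r dvd x - mm n" using QF[of "x - mm n"] lt[OF x] by simp
            moreover have "x = (x - mm n) + mm n" using False by simp
            ultimately have "2 ^ r dvd x" using drm by (metis dvd_add)
            then show ?thesis using lt[OF x] unfolding F2_def by auto
          qed
        qed
        show "F2 n r \<subseteq> H"
        proof
          fix x assume "x \<in> F2 n r"
          then have x: "x < 2 * mm n" "2 ^ r dvd x" unfolding F2_def by auto
          show "x \<in> H"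
          proof (cases "x < mm n")
            case True then show ?thesis using QF x by auto
          next
            case False
            have "2 ^ r dvd x - mm n" using x(2) drm by (simp add: dvd_diff_nat)
            then have "x - mm n \<in> H" using QF[of "x - mm n"] x(1) by simp
            then have "goplus n (x - mm n) (mm n) \<in> H" using cl True by blast
            then show ?thesis using add_m[OF n, of "x - mm n"] x(1) False by simp
          qed
        qed
      qed
      then show ?thesis using r by blast
    next
      case mH: False
      have key: "\<not> 2 ^ r dvd (h - mm n) \<and> 2 ^ r dvd 2 * (h - mm n)" if h: "h \<in> H" "mm n \<le> h" for h
      proof
        define y where "y = h - mm n"
        have hy: "h = y + mm n" "y < mm n" using h lt[OF h(1)] unfolding y_def by auto
        show "\<not> 2 ^ r dvd (h - mm n)"
        proof
          assume "2 ^ r dvd (h - mm n)"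
          then have yH: "y \<in> H" using QF hy unfolding y_def by auto
          show False
          proof (cases "y = 0")
            case True then show False using mH h hy by simp
          next
            case False
            have myH: "mm n - y \<in> H" using negQ[OF n sub cl yH hy(2)] False by simp
            have nle: "\<not> mm n \<le> mm n - y" using False hy(2) by linarith
            have "goplus n (mm n - y) h = (mm n - y + h) mod mm n + mm n"
              using gop[OF n, of "mm n - y" h] lt[OF h(1)] h(2) nle by (simp add: hi)
            also have "\<dots> = mm n" using hy by simp
            finally show False using cl myH h(1) mH by metis
          qed
        qed
        have "goplus n h h = (h + h) mod mm n" using gop[OF n lt[OF h(1)] lt[OF h(1)]] h(2) by (simp add: hi)
        moreover have "goplus n h h \<in> H" using cl h by blast
        moreover have "(h + h) mod mm n < mm n" using p by simp
        ultimately have "2 ^ r dvd (h + h) mod mm n" using QF by metis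
        then have "2 ^ r dvd h + h" using drm by (simp add: dvd_mod_iff)
        moreover have "2 * y = (h + h) - (mm n + mm n)" using hy by simp
        ultimately have "2 ^ r dvd 2 * y" using dvd_diff_nat dvd_add[OF drm drm] by metis
        then show "2 ^ r dvd 2 * (h - mm n)" unfolding y_def .
      qed
      have "r \<noteq> 0"
      proof
        assume "r = 0"
        then show False using key[OF h0] by simp
      qed
      then obtain s where s: "r = Suc s" by (cases r) auto
      have sle: "s \<le> n - 2" using r(1) s by simp
      have hm: "(h - mm n) mod 2 ^ Suc s = 2 ^ s" if h: "h \<in> H" "mm n \<le> h" for h
      proof -
        have "2 ^ s dvd (h - mm n)" using key[OF h] unfolding s power_Suc by simp
        then show ?thesis using mod_pow_half key[OF h] s by blast
      qed
      have dsm: "2 ^ Suc s dvd mm n" using drm s by simp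
      have hmod: "x mod 2 ^ Suc s = (x - mm n) mod 2 ^ Suc s" if "mm n \<le> x" for x
      proof -
        have "x = (x - mm n) + mm n" using that by simp
        then have "x mod 2 ^ Suc s = ((x - mm n) + mm n) mod 2 ^ Suc s" by simp
        also have "\<dots> = ((x - mm n) + mm n mod 2 ^ Suc s) mod 2 ^ Suc s" by (simp add: mod_add_right_eq)
        also have "\<dots> = (x - mm n) mod 2 ^ Suc s" using dsm by simp
        finally show ?thesis .
      qed
      have "H = F3 n s"
      proof
        show "H \<subseteq> F3 n s"
        proof
          fix x assume x: "x \<in> H"
          show "x \<in> F3 n s"
          proof (cases "x < mm n")
            case True
            then have "2 ^ Suc s dvd x" using QF x s by auto
            then show ?thesis using True lt[OF x] unfolding F3_def by auto
          next
            case False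
            then show ?thesis using hm[OF x] hmod lt[OF x] unfolding F3_def by auto
          qed
        qed
        show "F3 n s \<subseteq> H"
        proof
          fix x assume "x \<in> F3 n s"
          then have x: "x < 2 * mm n" "x mod 2 ^ Suc s = (if mm n \<le> x then 2 ^ s else 0)" unfolding F3_def by auto
          show "x \<in> H"
          proof (cases "x < mm n")
            case True
            then show ?thesis using QF x s by auto
          next
            case False
            define P where "P = (2::nat) ^ Suc s"
            define y' where "y' = x - mm n"
            define y0 where "y0 = h0 - mm n"
            have y'm: "y' mod P = 2 ^ s" using x(2) False hmod[of x] unfolding y'_def P_def by simp
            have y0m: "y0 mod P = 2 ^ s" using hm[OF h0] unfolding y0_def P_def by simp
            have y0l: "y0 < mm n" using lt[OF h0(1)] h0(2) unfolding y0_def by simp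
            define zz where "zz = y' + mm n - y0"
            have "y' = P * (y' div P) + 2 ^ s" using y'm by (metis div_mult_mod_eq mult.commute)
            moreover have "y0 = P * (y0 div P) + 2 ^ s" using y0m by (metis div_mult_mod_eq mult.commute)
            moreover have "mm n = P * (mm n div P)" using dsm unfolding P_def by simp
            moreover have "zz + y0 = y' + mm n" unfolding zz_def using y0l by simp
            ultimately have "zz = P * (y' div P) + P * (mm n div P) - P * (y0 div P)"
              by linarith
            then have Pz: "P dvd zz" by (metis dvd_add dvd_diff_nat dvd_triv_left)
            define q where "q = zz mod mm n"
            have ql: "q < mm n" unfolding q_def using p by simp
            have "2 ^ r dvd q" unfolding q_def using Pz drm s unfolding P_def by (simp add: dvd_mod_iff)
            then have qH: "q \<in> H" using QF ql by simp
            have "goplus n q h0 = (q + h0) mod mm n + mm n"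
              using gop[OF n, of q h0] ql lt[OF h0(1)] h0(2) p by (simp add: hi)
            also have "\<dots> = (zz + h0) mod mm n + mm n" unfolding q_def by (simp add: mod_add_left_eq)
            also have "zz + h0 = y' + mm n + mm n" unfolding zz_def y0_def using y0l h0(2) lt[OF h0(1)] by simp
            also have "(y' + mm n + mm n) mod mm n = y'" unfolding y'_def using x(1) False by (simp add: le_mod_geq)
            finally have "goplus n q h0 = x" unfolding y'_def using False by simp
            then show ?thesis using cl qH h0(1) by metis
          qed
        qed
      qed
      then show ?thesis using sle by blast
    qed
  qed
qed

lemma F1_sg: assumes n: "3 \<le> n" "s \<le> n - 1" shows "subgyrogroup n (F1 n s)" "subgroup_G2 n (F1 n s)"
  using nice_sg[OF n(1) F_sub(1) _ _ F1_nice[OF n(1)]] F_zero(1) F1_cl[OF n] by blast+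

lemma F2_sg: assumes n: "3 \<le> n" "s \<le> n - 1" shows "subgyrogroup n (F2 n s)"
proof -
  have p: "0 < mm n" using basics[OF n(1)] by simp
  have ne: "F2 n s \<noteq> {}" using F_zero(2)[OF p] by blast
  show ?thesis
  proof (cases "s = 0")
    case True
    show ?thesis
      by (rule sg_intro[OF n(1) F_sub(2) ne]) (use F2_cl[OF n] True ggyr_props(1)[OF n(1)] in \<open>auto simp: F2_def\<close>)
  next
    case False
    show ?thesis using nice_sg(1)[OF n(1) F_sub(2) ne _ F2_nice[OF n(1) False]] F2_cl[OF n] by blast
  qed
qed

lemma F2_grp: assumes n: "3 \<le> n" "s \<le> n - 1" "s \<noteq> 0" shows "subgroup_G2 n (F2 n s)"
proof -
  have p: "0 < mm n" using basics[OF n(1)] by simp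
  show ?thesis using nice_sg(2)[OF n(1) F_sub(2) _ _ F2_nice[OF n(1) n(3)]] F_zero(2)[OF p] F2_cl[OF n(1,2)] by blast
qed

lemma F3_sg: assumes n: "3 \<le> n" "s \<le> n - 2" shows "subgyrogroup n (F3 n s)" "subgroup_G2 n (F3 n s)"
proof -
  have p: "0 < mm n" using basics[OF n(1)] by simp
  show "subgyrogroup n (F3 n s)" "subgroup_G2 n (F3 n s)"
    using nice_sg[OF n(1) F_sub(3) _ _ F3_nice[OF n(1)]] F_zero(3)[OF p] F3_cl[OF n] by blast+
qed

lemma F2_0: assumes n: "3 \<le> n" shows "F2 n 0 = G2 n" "\<not> subgroup_G2 n (F2 n 0)"
proof -
  show e: "F2 n 0 = G2 n" unfolding F2_def G2_eq[OF n] by auto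
  have b: "mm n = 2 * cc n" "2 \<le> cc n" using basics[OF n] by auto
  have in1: "1 \<in> F2 n 0" "mm n \<in> F2 n 0" unfolding F2_def using b by auto
  have gm: "(1, mm n) \<in> gM n" using gM_iff[OF n, of 1 "mm n"] b by simp
  have "gA n 1 = 1 + cc n" unfolding gA_def Let_def OP_def PP_def using b by simp
  then have "ggyr n 1 (mm n) 1 \<noteq> 1" unfolding ggyr_def using gm b by simp
  then show "\<not> subgroup_G2 n (F2 n 0)" unfolding subgroup_G2_def using in1 by blast
qed

theorem mainTheorem4:
  fixes n :: nat
  assumes "n \<ge> 3"
  shows "(\<forall>H. H \<subseteq> G2 n \<longrightarrow>
            (subgyrogroup n H \<longleftrightarrow>
              (\<exists>s. s \<le> n - 1 \<and> H = cycP n s) \<or>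
              (\<exists>s. s \<le> n - 1 \<and> H = gen n {2 ^ s, mm n}) \<or>
              (\<exists>s. s \<le> n - 2 \<and> H = gen n {mm n + 2 ^ s})))
       \<and> (\<forall>s. s \<le> n - 1 \<longrightarrow> (subgroup_G2 n (gen n {2 ^ s, mm n}) \<longleftrightarrow> s \<noteq> 0))
       \<and> gen n {1, mm n} = G2 n
       \<and> (\<forall>s. s \<le> n - 2 \<longrightarrow> subgroup_G2 n (gen n {mm n + 2 ^ s}))"
proof (intro conjI allI impI)
  have n: "3 \<le> n" using assms by simp
  fix H assume "H \<subseteq> G2 n"
  show "subgyrogroup n H \<longleftrightarrow>
              (\<exists>s. s \<le> n - 1 \<and> H = cycP n s) \<or>
              (\<exists>s. s \<le> n - 1 \<and> H = gen n {2 ^ s, mm n}) \<or>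
              (\<exists>s. s \<le> n - 2 \<and> H = gen n {mm n + 2 ^ s})"
  proof
    assume "subgyrogroup n H"
    note C = sg_closed[OF n this]
    show "(\<exists>s. s \<le> n - 1 \<and> H = cycP n s) \<or>
              (\<exists>s. s \<le> n - 1 \<and> H = gen n {2 ^ s, mm n}) \<or>
              (\<exists>s. s \<le> n - 2 \<and> H = gen n {mm n + 2 ^ s})"
      using classify[OF n C] cycP_F1[OF n] gen_F2[OF n] gen_F3[OF n] by metis
  next
    assume "(\<exists>s. s \<le> n - 1 \<and> H = cycP n s) \<or>
              (\<exists>s. s \<le> n - 1 \<and> H = gen n {2 ^ s, mm n}) \<or>
              (\<exists>s. s \<le> n - 2 \<and> H = gen n {mm n + 2 ^ s})"
    then show "subgyrogroup n H"
      using cycP_F1[OF n] gen_F2[OF n] gen_F3[OF n] F1_sg[OF n] F2_sg[OF n] F3_sg[OF n] by metis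
  qed
next
  have n: "3 \<le> n" using assms by simp
  fix s :: nat assume s: "s \<le> n - 1"
  show "subgroup_G2 n (gen n {2 ^ s, mm n}) \<longleftrightarrow> s \<noteq> 0"
    using gen_F2[OF n s] F2_grp[OF n s] F2_0[OF n] by (cases "s = 0") auto
next
  have n: "3 \<le> n" using assms by simp
  show "gen n {1, mm n} = G2 n" using gen_F2[OF n, of 0] F2_0[OF n] by simp
next
  have n: "3 \<le> n" using assms by simp
  fix s :: nat assume s: "s \<le> n - 2"
  show "subgroup_G2 n (gen n {mm n + 2 ^ s})" using gen_F3[OF n s] F3_sg[OF n s] by simp
qed

end
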